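(* Any invertible matrix $B\in GL(n,\mathbb{C})$ can be written as a product $B=C_1C_2$ of two invertible diagonalizable matrices $C_1$ and $C_2$ with distinct eigenvalues. One of the $C_i$ may be chosen in a Zariski open set. *)

theory Defs
  imports "HOL-Analysis.Analysis"
begin

text \<open>Square complex matrices of size n = CARD('n) are represented as complex^'n^'n.\<close>

definition is_diagonal :: "complex^'n^'n \<Rightarrow> bool" where
  "is_diagonal D \<longleftrightarrow> (\<forall>i j. i \<noteq> j \<longrightarrow> D $ i $ j = 0)"

definition diagonalizable :: "complex^'n^'n \<Rightarrow> bool" where
  "diagonalizable A \<longleftrightarrow>
     (\<exists>(P::complex^'n^'n) (D::complex^'n^'n). invertible P \<and> is_diagonal D \<and> A = P ** D ** matrix_inv P)"

definition eigenvalues :: "complex^'n^'n \<Rightarrow> complex set" where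
  "eigenvalues A = {c. \<exists>v::complex^'n. v \<noteq> 0 \<and> A *v v = c *s v}"

definition distinct_eigenvalues :: "complex^'n^'n \<Rightarrow> bool" where
  "distinct_eigenvalues A \<longleftrightarrow> card (eigenvalues A) = CARD('n)"

inductive poly_fun :: "(complex^'n^'n \<Rightarrow> complex) \<Rightarrow> bool" where
  const: "poly_fun (\<lambda>A. c)"
| entry: "poly_fun (\<lambda>A. A $ i $ j)"
| add: "poly_fun p \<Longrightarrow> poly_fun q \<Longrightarrow> poly_fun (\<lambda>A. p A + q A)"
| mult: "poly_fun p \<Longrightarrow> poly_fun q \<Longrightarrow> poly_fun (\<lambda>A. p A * q A)"

definition zariski_open :: "(complex^'n^'n) set \<Rightarrow> bool" where
  "zariski_open U \<longleftrightarrow>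
     (\<exists>F. (\<forall>p\<in>F. poly_fun p) \<and> U = - {A. \<forall>p\<in>F. p A = 0})"

end

theory Submission imports Defs "Subresultants.Subresultant_Gcd" "HOL-Computational_Algebra.Field_as_Ring" "HOL-Computational_Algebra.Fundamental_Theorem_Algebra" begin

no_notation Matrix.vec_index (infixl "$" 100)
hide_const (open) Determinant.det Matrix.mat

lemma poly_fun_sum: "finite S \<Longrightarrow> (\<And>s. s\<in>S \<Longrightarrow> poly_fun (f s)) \<Longrightarrow> poly_fun (\<lambda>A. \<Sum>s\<in>S. f s A)"
proof (induction S rule: finite_induct)
  case empty then show ?case by (simp add: poly_fun.const)
next
  case (insert x F) then show ?case by (simp add: poly_fun.add)
qed

lemma poly_fun_prod: "finite S \<Longrightarrow> (\<And>s. s\<in>S \<Longrightarrow> poly_fun (f s)) \<Longrightarrow> poly_fun (\<lambda>A. \<Prod>s\<in>S. f s A)"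
proof (induction S rule: finite_induct)
  case empty then show ?case by (simp add: poly_fun.const)
next
  case (insert x F) then show ?case by (simp add: poly_fun.mult)
qed

definition ppf :: "(complex^'n^'n \<Rightarrow> complex poly) \<Rightarrow> bool" where
  "ppf P \<longleftrightarrow> (\<forall>k. poly_fun (\<lambda>A. coeff (P A) k))"

lemma ppf_const: "ppf (\<lambda>A. c)"
  unfolding ppf_def by (simp add: poly_fun.const)

lemma ppf_lin: "poly_fun a \<Longrightarrow> poly_fun b \<Longrightarrow> ppf (\<lambda>A. [:a A, b A:])"
  unfolding ppf_def
proof
  fix k assume "poly_fun a" "poly_fun b"
  then show "poly_fun (\<lambda>A. coeff [:a A, b A:] k)"
  proof -
    have "(\<lambda>A. coeff [:a A, b A:] k) = (if k = 0 then a else if k = 1 then b else (\<lambda>A. 0))"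
      by (rule ext) (cases k; auto simp: coeff_pCons split: nat.split)
    then show ?thesis using \<open>poly_fun a\<close> \<open>poly_fun b\<close> by (simp add: poly_fun.const)
  qed
qed

lemma ppf_add: "ppf P \<Longrightarrow> ppf Q \<Longrightarrow> ppf (\<lambda>A. P A + Q A)"
  unfolding ppf_def by (simp add: poly_fun.add)

lemma ppf_mult: "ppf P \<Longrightarrow> ppf Q \<Longrightarrow> ppf (\<lambda>A. P A * Q A)"
  unfolding ppf_def coeff_mult
  by (auto intro!: poly_fun_sum poly_fun.mult)

lemma ppf_sum: "finite S \<Longrightarrow> (\<And>s. s\<in>S \<Longrightarrow> ppf (f s)) \<Longrightarrow> ppf (\<lambda>A. \<Sum>s\<in>S. f s A)"
proof (induction S rule: finite_induct)
  case empty then show ?case by (simp add: ppf_const)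
next
  case (insert x F) then show ?case by (simp add: ppf_add)
qed

lemma ppf_prod: "finite S \<Longrightarrow> (\<And>s. s\<in>S \<Longrightarrow> ppf (f s)) \<Longrightarrow> ppf (\<lambda>A. \<Prod>s\<in>S. f s A)"
proof (induction S rule: finite_induct)
  case empty then show ?case by (simp add: ppf_const)
next
  case (insert x F) then show ?case by (simp add: ppf_mult)
qed

lemma ppf_pderiv: "ppf P \<Longrightarrow> ppf (\<lambda>A. pderiv (P A))"
  unfolding ppf_def coeff_pderiv by (auto intro!: poly_fun.mult poly_fun.const)

lemma ppf_det: "(\<And>i j. ppf (\<lambda>A. M A $ i $ j)) \<Longrightarrow> ppf (\<lambda>A. Determinants.det (M A))"
  unfolding Determinants.det_def
  by (intro ppf_sum ppf_mult ppf_prod ppf_const) (auto simp: finite_permutations)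

lemma poly_fun_det: "(\<And>i j. poly_fun (\<lambda>A. M A $ i $ j)) \<Longrightarrow> poly_fun (\<lambda>A. Determinants.det (M A))"
  unfolding Determinants.det_def
  by (intro poly_fun_sum poly_fun.mult poly_fun_prod poly_fun.const) (auto simp: finite_permutations)

lemma poly_fun_resultant_sub:
  assumes "ppf P" "ppf Q"
  shows "poly_fun (\<lambda>A. resultant_sub m k (P A) (Q A))"
proof -
  define E where "E = (\<lambda>A (i::nat) (j::nat). if i < k
       then if i \<le> j \<and> j - i \<le> m then coeff (P A) (m + i - j) else 0
       else if i - k \<le> j \<and> j \<le> i then coeff (Q A) (i - j) else 0)"
  have eq: "resultant_sub m k (P A) (Q A) = (\<Sum>p | p permutes {0..<m+k}. of_int (sign p) * (\<Prod>i=0..<m+k. E A i (p i)))" for A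
    unfolding resultant_sub_def Determinant.det_def sylvester_mat_sub_def E_def
    by (auto intro!: sum.cong prod.cong simp: permutes_in_image)
  have "poly_fun (\<lambda>A. E A i j)" for i j
    using assms unfolding E_def ppf_def
    by (cases "i < k"; cases "i \<le> j \<and> j - i \<le> m"; cases "i - k \<le> j \<and> j \<le> i") (auto simp: poly_fun.const)
  then show ?thesis unfolding eq
    by (intro poly_fun_sum poly_fun.mult poly_fun_prod poly_fun.const) (auto simp: finite_permutations)
qed

definition G :: "complex^'n^'n \<Rightarrow> complex^'n^'n \<Rightarrow> complex poly" where
  "G M N = Determinants.det (\<chi> i. \<chi> j. [:M$i$j, N$i$j:])"

lemma poly_G: "poly (G M N) c = Determinants.det (\<chi> i. \<chi> j. M$i$j + c * N$i$j)"
  unfolding G_def Determinants.det_def by (simp add: poly_sum poly_prod)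

lemma prod_lin: "finite S \<Longrightarrow> degree (\<Prod>i\<in>S. [:a i, b i:]) \<le> card S \<and>
   coeff (\<Prod>i\<in>S. [:a i, b i:]) (card S) = (\<Prod>i\<in>S. b i)"
proof (induction S rule: finite_induct)
  case empty then show ?case by simp
next
  case (insert x F)
  define P where "P = (\<Prod>i\<in>F. [:a i, b i:])"
  have eq: "(\<Prod>i\<in>insert x F. [:a i, b i:]) = [:a x, b x:] * P"
    using insert by (simp add: P_def)
  have d: "degree P \<le> card F" using insert P_def by simp
  have "degree ([:a x, b x:] * P) \<le> degree [:a x, b x:] + degree P" by (rule degree_mult_le)
  also have "\<dots> \<le> 1 + card F" using d by (simp add: degree_pCons_le add_mono)
  finally have 1: "degree ([:a x, b x:] * P) \<le> card (insert x F)" using insert by simp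
  have "coeff P (Suc (card F)) = 0" using d by (simp add: coeff_eq_0)
  then have "coeff ([:a x, b x:] * P) (Suc (card F)) = b x * coeff P (card F)"
    by (simp add: mult_pCons_left)
  then show ?case using 1 insert eq P_def by simp
qed

lemma degree_G: "degree (G M N) \<le> CARD('n)" and coeff_G: "coeff (G M N) CARD('n) = Determinants.det N"
  for M N :: "complex^'n^'n"
proof -
  have *: "degree (\<Prod>i\<in>UNIV. [:M $ i $ p i, N $ i $ p i:]) \<le> CARD('n) \<and>
     coeff (\<Prod>i\<in>UNIV. [:M $ i $ p i, N $ i $ p i:]) CARD('n) = (\<Prod>i\<in>UNIV. N $ i $ p i)" for p :: "'n \<Rightarrow> 'n"
    using prod_lin[of "UNIV::'n set" "\<lambda>i. M $ i $ p i" "\<lambda>i. N $ i $ p i"] by simp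
  have "degree (of_int (sign p) * (\<Prod>i\<in>UNIV. [:M $ i $ p i, N $ i $ p i:]) :: complex poly) \<le> CARD('n)" for p :: "'n \<Rightarrow> 'n"
    using * [of p] degree_mult_le[of "of_int (sign p) :: complex poly"] by (simp add: of_int_poly)
  then show "degree (G M N) \<le> CARD('n)"
    unfolding G_def Determinants.det_def by (auto intro!: degree_sum_le)
  show "coeff (G M N) CARD('n) = Determinants.det N"
    unfolding G_def Determinants.det_def using * by (simp add: coeff_sum of_int_poly)
qed

lemma G_mult: "(\<chi> i. \<chi> j. M$i$j + c * N$i$j) *v v = M *v v + c *s (N *v v)"
  by (subst Finite_Cartesian_Product.vec_eq_iff) (simp add: matrix_vector_mult_def sum.distrib sum_distrib_left algebra_simps)

lemma det_zero_iff: "det (X::complex^'n^'n) = 0 \<longleftrightarrow> (\<exists>v. v \<noteq> 0 \<and> X *v v = 0)"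
  by (meson invertible_det_nz invertible_left_inverse
    matrix_left_invertible_injective vec.inj_iff_eq_0)

lemma matrix_inv: "invertible A \<Longrightarrow> A ** matrix_inv A = mat 1 \<and> matrix_inv A ** A = mat 1"
  unfolding invertible_def matrix_inv_def by (rule someI_ex)

lemma eig_G1: "c \<in> eigenvalues M \<longleftrightarrow> poly (G (-M) (mat 1)) c = 0" for M :: "complex^'n^'n"
proof -
  have "(\<chi> i. \<chi> j. (-M)$i$j + c * (mat 1 :: complex^'n^'n)$i$j) *v v = 0 \<longleftrightarrow> M *v v = c *s v" for v
    unfolding G_mult matrix_vector_mul_lid by (auto simp: matrix_vector_mult_def Finite_Cartesian_Product.vec_eq_iff sum_negf algebra_simps)
  then show ?thesis unfolding poly_G det_zero_iff eigenvalues_def by auto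
qed

lemma eig_G2:
  assumes "invertible C"
  shows "c \<in> eigenvalues (matrix_inv C ** B) \<longleftrightarrow> poly (G (-B) C) c = 0"
proof -
  note ci = matrix_inv[OF assms]
  have "(\<chi> i. \<chi> j. (-B)$i$j + c * C$i$j) *v v = 0 \<longleftrightarrow> (matrix_inv C ** B) *v v = c *s v" for v
  proof -
    have "(\<chi> i. \<chi> j. (-B)$i$j + c * C$i$j) *v v = 0 \<longleftrightarrow> B *v v = c *s (C *v v)"
      unfolding G_mult by (auto simp: matrix_vector_mult_def Finite_Cartesian_Product.vec_eq_iff sum_negf algebra_simps)
    also have "\<dots> \<longleftrightarrow> (matrix_inv C ** B) *v v = c *s v"
    proof
      assume "B *v v = c *s (C *v v)"
      then have "(matrix_inv C ** B) *v v = (matrix_inv C ** C) *v (c *s v)"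
        by (simp add: matrix_vector_mul_assoc[symmetric] vector_scalar_commute)
      then show "(matrix_inv C ** B) *v v = c *s v" using ci by simp
    next
      assume "(matrix_inv C ** B) *v v = c *s v"
      then have "C *v ((matrix_inv C ** B) *v v) = C *v (c *s v)" by simp
      then show "B *v v = c *s (C *v v)" using ci
        by (simp add: matrix_vector_mul_assoc vector_scalar_commute matrix_mul_assoc)
    qed
    finally show ?thesis .
  qed
  then show ?thesis unfolding poly_G det_zero_iff eigenvalues_def by auto
qed

lemma degree_eq_sum_order:
  assumes "(p::complex poly) \<noteq> 0"
  shows "degree p = (\<Sum>z | poly p z = 0. order z p)"
proof -
  have "degree p = degree (Polynomial.smult (lead_coeff p) (\<Prod>z|poly p z = 0. [:-z, 1:] ^ order z p))"
    by (simp only: complex_poly_decompose)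
  also have "\<dots> = degree (\<Prod>z|poly p z = 0. [:-z, 1:] ^ order z p)"
    using assms by (simp add: degree_smult_eq)
  also have "\<dots> = (\<Sum>z | poly p z = 0. degree ([:-z, 1:] ^ order z p))"
    by (rule degree_prod_sum_eq) simp
  also have "\<dots> = (\<Sum>z | poly p z = 0. order z p)"
    by (simp add: degree_power_eq)
  finally show ?thesis .
qed

lemma card_roots_iff:
  assumes "(p::complex poly) \<noteq> 0"
  shows "card {z. poly p z = 0} = degree p \<longleftrightarrow> rsquarefree p"
proof -
  let ?R = "{z. poly p z = 0}"
  have fin: "finite ?R" using assms by (rule poly_roots_finite)
  have ge: "z \<in> ?R \<Longrightarrow> order z p \<ge> 1" for z using assms order_root[of p z] by simp
  have "(\<Sum>z\<in>?R. order z p) = (\<Sum>z\<in>?R. 1 + (order z p - 1))"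
  proof (rule sum.cong[OF refl])
    fix z assume "z \<in> ?R" then show "order z p = 1 + (order z p - 1)" using ge[of z] by arith
  qed
  also have "\<dots> = card ?R + (\<Sum>z\<in>?R. order z p - 1)"
    by (simp only: sum.distrib card_eq_sum)
  finally have eq: "degree p = card ?R + (\<Sum>z\<in>?R. order z p - 1)"
    using degree_eq_sum_order[OF assms] by simp
  have "card ?R = degree p \<longleftrightarrow> (\<forall>z\<in>?R. order z p - 1 = 0)"
    using eq fin by simp
  also have "\<dots> \<longleftrightarrow> rsquarefree p"
    unfolding rsquarefree_def
  proof
    assume H: "\<forall>z\<in>?R. order z p - 1 = 0"
    have "order a p = 0 \<or> order a p = 1" for a
    proof (cases "poly p a = 0")
      case True then show ?thesis using H ge[of a] by auto
    next
      case False then show ?thesis using order_root[of p a] by auto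
    qed
    then show "p \<noteq> 0 \<and> (\<forall>a. order a p = 0 \<or> order a p = 1)" using assms by auto
  next
    assume "p \<noteq> 0 \<and> (\<forall>a. order a p = 0 \<or> order a p = 1)"
    then have "\<forall>a. order a p = 0 \<or> order a p = 1" by blast
    then show "\<forall>z\<in>?R. order z p - 1 = 0" using ge
      by (metis diff_self_eq_0 not_one_le_zero)
  qed
  finally show ?thesis .
qed

lemma res_iff:
  assumes "(p::complex poly) \<noteq> 0"
  shows "resultant p (pderiv p) \<noteq> 0 \<longleftrightarrow> rsquarefree p"
proof -
  have "degree (gcd p (pderiv p)) \<noteq> 0 \<longleftrightarrow> (\<exists>a. poly p a = 0 \<and> poly (pderiv p) a = 0)"
  proof
    assume "degree (gcd p (pderiv p)) \<noteq> 0"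
    then obtain a where a: "poly (gcd p (pderiv p)) a = 0"
      using alg_closed_imp_poly_has_root by blast
    then have "[:-a,1:] dvd gcd p (pderiv p)" by (simp add: poly_eq_0_iff_dvd)
    then have "[:-a,1:] dvd p" "[:-a,1:] dvd pderiv p"
      by (meson dvd_trans gcd_dvd1 gcd_dvd2)+
    then show "\<exists>a. poly p a = 0 \<and> poly (pderiv p) a = 0" by (auto simp: poly_eq_0_iff_dvd)
  next
    assume "\<exists>a. poly p a = 0 \<and> poly (pderiv p) a = 0"
    then obtain a where "[:-a,1:] dvd p" "[:-a,1:] dvd pderiv p" by (auto simp: poly_eq_0_iff_dvd)
    then have d: "[:-a,1:] dvd gcd p (pderiv p)" by simp
    have "gcd p (pderiv p) \<noteq> 0" using assms by simp
    from dvd_imp_degree_le[OF d this] show "degree (gcd p (pderiv p)) \<noteq> 0" by simp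
  qed
  then show ?thesis unfolding rsquarefree_roots using resultant_0_gcd[of p "pderiv p"] by blast
qed

lemma count_roots:
  fixes P :: "complex poly"
  assumes "degree P \<le> n" "coeff P n \<noteq> 0"
  shows "resultant_sub n (n-1) P (pderiv P) \<noteq> 0 \<longleftrightarrow> card {z. poly P z = 0} = n"
proof -
  have dP: "degree P = n" by (meson assms le_antisym le_degree)
  have P0: "P \<noteq> 0" using assms by auto
  have "resultant_sub n (n-1) P (pderiv P) = resultant P (pderiv P)"
    by (simp add: resultant_sub dP degree_pderiv)
  then show ?thesis using res_iff[OF P0] card_roots_iff[OF P0] dP by simp
qed

lemma mv_sum: "(M::complex^'n^'n) *v (\<Sum>k\<in>K. f k) = (\<Sum>k\<in>K. M *v f k)"
  by (metis vec.sum)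

lemma smult_eq0: "(c::complex) *s (v::complex^'n) = 0 \<longleftrightarrow> c = 0 \<or> v = 0"
  by simp

lemma smult_sum: "(c::complex) *s (\<Sum>k\<in>K. f k) = (\<Sum>k\<in>K. c *s (f k::complex^'n))"
  by (simp add: Finite_Cartesian_Product.vec_eq_iff sum_component sum_distrib_left)

lemma sa: "(c::complex) *s (d *s (v::complex^'n)) = (d * c) *s v"
  by (simp add: Finite_Cartesian_Product.vec_eq_iff)

lemma eig_indep:
  fixes M :: "complex^'n^'n" and v :: "'k \<Rightarrow> complex^'n" and lam :: "'k \<Rightarrow> complex"
  assumes inj: "inj lam" and ev: "\<And>k. M *v v k = lam k *s v k" and nz: "\<And>k. v k \<noteq> 0" and fin: "finite K"
  shows "(\<Sum>k\<in>K. x k *s v k) = 0 \<Longrightarrow> \<forall>k\<in>K. x k = 0"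
  using fin
proof (induction K arbitrary: x rule: finite_induct)
  case empty then show ?case by simp
next
  case (insert j K)
  have S: "(\<Sum>k\<in>K. x k *s v k) + x j *s v j = 0" using insert by (simp add: add.commute)
  have "M *v ((\<Sum>k\<in>K. x k *s v k) + x j *s v j) = (\<Sum>k\<in>K. (lam k * x k) *s v k) + (lam j * x j) *s v j"
    by (simp only: mv_sum matrix_vector_right_distrib vector_scalar_commute ev sa)
  then have S1: "(\<Sum>k\<in>K. (lam k * x k) *s v k) + (lam j * x j) *s v j = 0"
    using S by simp
  have S2: "(\<Sum>k\<in>K. (x k * lam j) *s v k) + (lam j * x j) *s v j = 0"
  proof -
    have "lam j *s ((\<Sum>k\<in>K. x k *s v k) + x j *s v j) = (\<Sum>k\<in>K. (x k * lam j) *s v k) + (x j * lam j) *s v j"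
      by (simp only: vector_add_ldistrib smult_sum sa)
    then show ?thesis using S by (simp add: mult.commute)
  qed
  have "(\<Sum>k\<in>K. (x k * (lam k - lam j)) *s v k) = 0"
  proof -
    have "(\<Sum>k\<in>K. (x k * (lam k - lam j)) *s v k) = (\<Sum>k\<in>K. (lam k * x k) *s v k) - (\<Sum>k\<in>K. (x k * lam j) *s v k)"
    proof -
      have eqk: "\<And>k. (x k * (lam k - lam j)) *s v k = (lam k * x k) *s v k - (x k * lam j) *s v k"
        by (simp add: Finite_Cartesian_Product.vec_eq_iff algebra_simps)
      have "(\<Sum>k\<in>K. (x k * (lam k - lam j)) *s v k) = (\<Sum>k\<in>K. (lam k * x k) *s v k - (x k * lam j) *s v k)"
        by (rule sum.cong[OF refl]) (rule eqk)
      also have "\<dots> = (\<Sum>k\<in>K. (lam k * x k) *s v k) - (\<Sum>k\<in>K. (x k * lam j) *s v k)"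
        by (rule sum_subtractf)
      finally show ?thesis .
    qed
    also have "\<dots> = 0"
    proof -
      have "(\<Sum>k\<in>K. (lam k * x k) *s v k) + (lam j * x j) *s v j = (\<Sum>k\<in>K. (x k * lam j) *s v k) + (lam j * x j) *s v j"
        unfolding S1 S2 by (rule refl)
      then have "(\<Sum>k\<in>K. (lam k * x k) *s v k) = (\<Sum>k\<in>K. (x k * lam j) *s v k)"
        by (rule add_right_imp_eq)
      then show ?thesis unfolding right_minus_eq .
    qed
    finally show ?thesis .
  qed
  then have "\<forall>k\<in>K. x k * (lam k - lam j) = 0" using insert.IH[of "\<lambda>k. x k * (lam k - lam j)"] by blast
  moreover have "\<forall>k\<in>K. lam k \<noteq> lam j" using inj insert.hyps by (metis injD)
  ultimately have xK: "\<forall>k\<in>K. x k = 0" by simp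
  then have "x j *s v j = 0" using S by simp
  then have "x j = 0" using nz smult_eq0 by blast
  then show ?case using xK by simp
qed


lemma distinct_diag:
  fixes M :: "complex^'n^'n"
  assumes "distinct_eigenvalues M"
  shows "diagonalizable M"
proof -
  have cardE: "card (eigenvalues M) = CARD('n)" using assms unfolding distinct_eigenvalues_def .
  have finE: "finite (eigenvalues M)" by (rule card_ge_0_finite) (simp add: cardE)
  obtain lam where bij: "bij_betw lam (UNIV::'n set) (eigenvalues M)"
    using finite_same_card_bij[of "UNIV::'n set" "eigenvalues M"] cardE finE by auto
  then have inj: "inj lam" and lamE: "\<And>k. lam k \<in> eigenvalues M" by (auto simp: bij_betw_def)
  have "\<forall>k. \<exists>w. w \<noteq> 0 \<and> M *v w = lam k *s w" using lamE eigenvalues_def by auto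
  from choice[OF this] obtain v where "\<forall>k. v k \<noteq> 0 \<and> M *v v k = lam k *s v k" by blast
  then have v: "\<And>k. v k \<noteq> 0" "\<And>k. M *v v k = lam k *s v k" by auto
  define P :: "complex^'n^'n" where "P = (\<chi> i. \<chi> k. v k $ i)"
  have Pv: "P *v x = (\<Sum>k\<in>UNIV. x $ k *s v k)" for x
    by (simp add: matrix_mult_sum P_def column_def)
  have "P *v x = 0 \<Longrightarrow> x = 0" for x
  proof -
    assume H: "P *v x = 0"
    have "(\<Sum>k\<in>UNIV. x $ k *s v k) = 0" using H unfolding Pv .
    then have "\<forall>k\<in>UNIV. x $ k = 0" by (rule eig_indep[OF inj v(2) v(1) finite_class.finite_UNIV, of "\<lambda>k. x$k"])
    then show "x = 0" by (simp add: Finite_Cartesian_Product.vec_eq_iff)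
  qed
  then have invP: "invertible P" unfolding invertible_det_nz using det_zero_iff by blast
  define D :: "complex^'n^'n" where "D = (\<chi> i. \<chi> j. if i = j then lam i else 0)"
  have diagD: "is_diagonal D" by (simp add: is_diagonal_def D_def)
  have MP: "M ** P = P ** D"
  proof -
    have 1: "(M ** P) $ i $ k = (M *v v k) $ i" for i k
      by (simp add: matrix_matrix_mult_def matrix_vector_mult_def P_def)
    have 2: "(P ** D) $ i $ k = lam k * v k $ i" for i k
    proof -
      have "(P ** D) $ i $ k = (\<Sum>j\<in>UNIV. v j $ i * (if j = k then lam j else 0))"
        by (simp add: matrix_matrix_mult_def P_def D_def)
      also have "\<dots> = (\<Sum>j\<in>UNIV. if j = k then lam k * v k $ i else 0)"
        by (rule sum.cong) auto
      also have "\<dots> = lam k * v k $ i" by simp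
      finally show ?thesis .
    qed
    show ?thesis by (simp add: Finite_Cartesian_Product.vec_eq_iff 1 2 v(2))
  qed
  have "M = P ** D ** matrix_inv P"
  proof -
    have "M = M ** (P ** matrix_inv P)" using matrix_inv[OF invP] by simp
    also have "\<dots> = P ** D ** matrix_inv P" by (simp only: matrix_mul_assoc MP)
    finally show ?thesis .
  qed
  then show ?thesis unfolding diagonalizable_def using invP diagD by blast
qed

lemma poly_fun_line:
  assumes "poly_fun p"
  shows "\<exists>r. \<forall>t. p (\<chi> i. \<chi> j. A$i$j + t * D$i$j) = poly r t"
  using assms
proof (induction p rule: poly_fun.induct)
  case (const c) then show ?case by (intro exI[of _ "[:c:]"]) simp
next
  case (entry i j) then show ?case by (intro exI[of _ "[:A$i$j, D$i$j:]"]) simp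
next
  case (add p q)
  then obtain r1 r2 where "\<forall>t. p (\<chi> i. \<chi> j. A$i$j + t * D$i$j) = poly r1 t" "\<forall>t. q (\<chi> i. \<chi> j. A$i$j + t * D$i$j) = poly r2 t" by blast
  then show ?case by (intro exI[of _ "r1 + r2"]) simp
next
  case (mult p q)
  then obtain r1 r2 where "\<forall>t. p (\<chi> i. \<chi> j. A$i$j + t * D$i$j) = poly r1 t" "\<forall>t. q (\<chi> i. \<chi> j. A$i$j + t * D$i$j) = poly r2 t" by blast
  then show ?case by (intro exI[of _ "r1 * r2"]) simp
qed

lemma common_nonzero:
  fixes p q :: "complex^'n^'n \<Rightarrow> complex"
  assumes "poly_fun p" "poly_fun q" "p X \<noteq> 0" "q Y \<noteq> 0"
  shows "\<exists>Z. p Z \<noteq> 0 \<and> q Z \<noteq> 0"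
proof -
  define L where "L = (\<lambda>t::complex. (\<chi> i. \<chi> j. X$i$j + t * (Y - X)$i$j) :: complex^'n^'n)"
  have L0: "L 0 = X" and L1: "L 1 = Y" unfolding L_def by (simp_all add: Finite_Cartesian_Product.vec_eq_iff)
  obtain r1 where r1: "\<forall>t. p (L t) = poly r1 t" using poly_fun_line[OF assms(1)] unfolding L_def by blast
  obtain r2 where r2: "\<forall>t. q (L t) = poly r2 t" using poly_fun_line[OF assms(2)] unfolding L_def by blast
  have "r1 \<noteq> 0" using r1 assms(3) L0 by (metis poly_0)
  moreover have "r2 \<noteq> 0" using r2 assms(4) L1 by (metis poly_0)
  ultimately have "r1 * r2 \<noteq> 0" by simp
  then obtain t where "poly (r1 * r2) t \<noteq> 0" using poly_all_0_iff_0 by blast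
  then show ?thesis using r1 r2 by (intro exI[of _ "L t"]) simp
qed

lemma poly_fun_neg_entry: "poly_fun (\<lambda>A::complex^'n^'n. - (A $ i $ j))"
proof -
  have "(\<lambda>A::complex^'n^'n. - (A $ i $ j)) = (\<lambda>A. (-1) * A $ i $ j)" by simp
  moreover have "poly_fun (\<lambda>A::complex^'n^'n. (-1) * A $ i $ j)"
    by (rule poly_fun.mult[OF poly_fun.const poly_fun.entry])
  ultimately show ?thesis by simp
qed

lemma ppf_G:
  assumes "\<And>i j. poly_fun (\<lambda>A. M A $ i $ j)" "\<And>i j. poly_fun (\<lambda>A. N A $ i $ j)"
  shows "ppf (\<lambda>A. G (M A) (N A))"
  unfolding G_def by (rule ppf_det) (simp add: ppf_lin assms)

definition p1 :: "complex^'n^'n \<Rightarrow> complex" where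
  "p1 C = resultant_sub CARD('n) (CARD('n) - 1) (G (-C) (mat 1)) (pderiv (G (-C) (mat 1)))"

definition p2 :: "complex^'n^'n \<Rightarrow> complex^'n^'n \<Rightarrow> complex" where
  "p2 B C = det C * resultant_sub CARD('n) (CARD('n) - 1) (G (-B) C) (pderiv (G (-B) C))"

lemma poly_fun_p1: "poly_fun (p1 :: complex^'n^'n \<Rightarrow> complex)"
proof -
  have "ppf (\<lambda>C::complex^'n^'n. G (-C) (mat 1))"
    by (rule ppf_G) (simp_all add: poly_fun_neg_entry poly_fun.const)
  then show ?thesis unfolding p1_def[abs_def]
    by (intro poly_fun_resultant_sub ppf_pderiv)
qed

lemma poly_fun_p2: "poly_fun (p2 (B::complex^'n^'n))"
proof -
  have "ppf (\<lambda>C::complex^'n^'n. G (-B) C)"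
    by (rule ppf_G) (simp_all add: poly_fun.const poly_fun.entry)
  then show ?thesis unfolding p2_def[abs_def]
    by (intro poly_fun.mult poly_fun_det poly_fun.entry poly_fun_resultant_sub ppf_pderiv)
qed

lemma p1_iff: "p1 C \<noteq> 0 \<longleftrightarrow> distinct_eigenvalues (C::complex^'n^'n)"
proof -
  have "p1 C \<noteq> 0 \<longleftrightarrow> card {z. poly (G (-C) (mat 1)) z = 0} = CARD('n)"
    unfolding p1_def by (rule count_roots) (simp_all add: degree_G coeff_G)
  also have "{z. poly (G (-C) (mat 1)) z = 0} = eigenvalues C" using eig_G1 by blast
  finally show ?thesis unfolding distinct_eigenvalues_def .
qed

lemma p2_iff: "p2 B C \<noteq> 0 \<longleftrightarrow> invertible C \<and> distinct_eigenvalues (matrix_inv C ** (B::complex^'n^'n))"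
proof (cases "invertible C")
  case True
  then have dC: "det C \<noteq> 0" by (simp add: invertible_det_nz)
  have "resultant_sub CARD('n) (CARD('n) - 1) (G (-B) C) (pderiv (G (-B) C)) \<noteq> 0 \<longleftrightarrow> card {z. poly (G (-B) C) z = 0} = CARD('n)"
    by (rule count_roots) (simp_all add: degree_G coeff_G dC)
  also have "{z. poly (G (-B) C) z = 0} = eigenvalues (matrix_inv C ** B)" using eig_G2[OF True] by blast
  finally show ?thesis unfolding distinct_eigenvalues_def p2_def using True dC by simp
next
  case False
  then show ?thesis unfolding p2_def by (simp add: invertible_det_nz)
qed

lemma eig_diag:
  fixes d :: "'n::finite \<Rightarrow> complex"
  shows "eigenvalues ((\<chi> i. \<chi> j. if i = j then d i else 0) :: complex^'n^'n) = range d"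
proof
  let ?D = "(\<chi> i. \<chi> j. if i = j then d i else 0) :: complex^'n^'n"
  have Dv: "?D *v v = (\<chi> i. d i * v $ i)" for v
  proof -
    have "(?D *v v) $ i = d i * v $ i" for i
    proof -
      have "(?D *v v) $ i = (\<Sum>j\<in>UNIV. (if i = j then d i else 0) * v $ j)"
        by (simp add: matrix_vector_mult_def)
      also have "\<dots> = (\<Sum>j\<in>UNIV. if i = j then d i * v $ i else 0)" by (rule sum.cong) auto
      also have "\<dots> = d i * v $ i" by simp
      finally show ?thesis .
    qed
    then show ?thesis by (simp add: Finite_Cartesian_Product.vec_eq_iff)
  qed
  show "eigenvalues ?D \<subseteq> range d"
  proof
    fix c assume "c \<in> eigenvalues ?D"
    then obtain v where v: "v \<noteq> 0" "?D *v v = c *s v" unfolding eigenvalues_def by blast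
    then obtain i where i: "v $ i \<noteq> 0" by (metis Finite_Cartesian_Product.vec_eq_iff zero_index)
    have "d i * v $ i = c * v $ i" using v(2) Dv[of v] by (metis vec_lambda_beta vector_smult_component)
    then have "c = d i" using i by simp
    then show "c \<in> range d" by (rule range_eqI)
  qed
  show "range d \<subseteq> eigenvalues ?D"
  proof
    fix c assume "c \<in> range d"
    then obtain i where c: "c = d i" by blast
    let ?v = "(\<chi> j. if j = i then 1 else 0) :: complex^'n"
    have "?v \<noteq> 0"
    proof
      assume "?v = 0"
      then have "?v $ i = 0" by simp
      then show False by simp
    qed
    moreover have "?D *v ?v = c *s ?v" unfolding Dv c by (auto simp: Finite_Cartesian_Product.vec_eq_iff)
    ultimately show "c \<in> eigenvalues ?D" unfolding eigenvalues_def by blast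
  qed
qed


lemma inv_invertible: "invertible (C::complex^'n^'n) \<Longrightarrow> invertible (matrix_inv C)"
  unfolding invertible_def[of "matrix_inv C"] using matrix_inv[of C] by blast

lemma mult_invertible: "invertible (A::complex^'n^'n) \<Longrightarrow> invertible (B::complex^'n^'n) \<Longrightarrow> invertible (A ** B)"
  unfolding invertible_det_nz det_mul by simp

theorem mainTheorem5:
  fixes B :: "complex^'n^'n"
  assumes "invertible B"
  shows "(\<exists>C1 C2. B = C1 ** C2 \<and>
            invertible C1 \<and> diagonalizable C1 \<and> distinct_eigenvalues C1 \<and>
            invertible C2 \<and> diagonalizable C2 \<and> distinct_eigenvalues C2)
       \<and> (\<exists>U. zariski_open U \<and> U \<noteq> {} \<and>
            (\<forall>C1\<in>U. invertible C1 \<and> diagonalizable C1 \<and> distinct_eigenvalues C1 \<and>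
               (let C2 = matrix_inv C1 ** B in
                  B = C1 ** C2 \<and> invertible C2 \<and> diagonalizable C2 \<and> distinct_eigenvalues C2)))"
proof -
  obtain f :: "'n \<Rightarrow> nat" and m where "f ` UNIV = {i. i < m}" "inj_on f UNIV"
    using finite_imp_inj_to_nat_seg[of "UNIV::'n set"] by auto
  then have inj_f: "inj f" by simp
  define d :: "'n \<Rightarrow> complex" where "d i = of_nat (Suc (f i))" for i
  have inj_d: "inj d" using inj_f unfolding inj_def d_def by (metis Suc_inject of_nat_eq_iff)
  have d0: "d i \<noteq> 0" for i by (simp add: d_def del: of_nat_Suc)
  define D0 :: "complex^'n^'n" where "D0 = (\<chi> i. \<chi> j. if i = j then d i else 0)"
  have eD: "eigenvalues D0 = range d" unfolding D0_def by (rule eig_diag)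
  have distD: "distinct_eigenvalues D0" unfolding distinct_eigenvalues_def eD
    using card_image[OF inj_d] by simp
  have detD: "det D0 = (\<Prod>i\<in>UNIV. D0 $ i $ i)" by (rule det_diagonal) (simp add: D0_def)
  have "det D0 \<noteq> 0" unfolding detD using d0 by (simp add: D0_def)
  then have invD: "invertible D0" by (simp add: invertible_det_nz)
  note iD = matrix_inv[OF invD]
  define C0 where "C0 = B ** matrix_inv D0"
  have C0D: "C0 ** D0 = B" unfolding C0_def by (simp add: matrix_mul_assoc[symmetric] iD)
  have invC0: "invertible C0" unfolding C0_def
    by (rule mult_invertible[OF assms inv_invertible[OF invD]])
  have "matrix_inv C0 ** B = D0"
    unfolding C0D[symmetric] by (simp add: matrix_mul_assoc matrix_inv[OF invC0])
  then have p2C0: "p2 B C0 \<noteq> 0" using invC0 distD by (simp add: p2_iff)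
  have p1D0: "p1 D0 \<noteq> 0" by (subst p1_iff) (rule distD)
  obtain Z where Z: "p1 Z \<noteq> 0" "p2 B Z \<noteq> 0"
    using common_nonzero[OF poly_fun_p1 poly_fun_p2 p1D0 p2C0] by blast
  define U where "U = {C. p1 C * p2 B C \<noteq> 0}"
  have good: "\<forall>C1\<in>U. invertible C1 \<and> diagonalizable C1 \<and> distinct_eigenvalues C1 \<and>
               (let C2 = matrix_inv C1 ** B in
                  B = C1 ** C2 \<and> invertible C2 \<and> diagonalizable C2 \<and> distinct_eigenvalues C2)"
  proof
    fix C assume "C \<in> U"
    then have h1: "p1 C \<noteq> 0" and h2: "p2 B C \<noteq> 0" by (auto simp: U_def)
    from h1 have dC: "distinct_eigenvalues C" by (simp add: p1_iff)
    from h2 have iC: "invertible C" and dC2: "distinct_eigenvalues (matrix_inv C ** B)" by (simp_all add: p2_iff)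
    have eq: "B = C ** (matrix_inv C ** B)" by (simp add: matrix_mul_assoc matrix_inv[OF iC])
    have iC2: "invertible (matrix_inv C ** B)" by (rule mult_invertible[OF inv_invertible[OF iC] assms])
    show "invertible C \<and> diagonalizable C \<and> distinct_eigenvalues C \<and>
               (let C2 = matrix_inv C ** B in
                  B = C ** C2 \<and> invertible C2 \<and> diagonalizable C2 \<and> distinct_eigenvalues C2)"
      unfolding Let_def using iC dC dC2 eq iC2 distinct_diag by blast
  qed
  have zU: "zariski_open U" unfolding zariski_open_def
  proof (intro exI[of _ "{\<lambda>C. p1 C * p2 B C}"] conjI)
    show "\<forall>p\<in>{\<lambda>C. p1 C * p2 B C}. poly_fun p" using poly_fun.mult[OF poly_fun_p1 poly_fun_p2] by simp
    show "U = - {A. \<forall>p\<in>{\<lambda>C. p1 C * p2 B C}. p A = 0}" by (auto simp: U_def)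
  qed
  have ZU: "Z \<in> U" using Z by (simp add: U_def)
  have "\<exists>C1 C2. B = C1 ** C2 \<and>
            invertible C1 \<and> diagonalizable C1 \<and> distinct_eigenvalues C1 \<and>
            invertible C2 \<and> diagonalizable C2 \<and> distinct_eigenvalues C2"
    using good ZU unfolding Let_def by blast
  moreover have "U \<noteq> {}" using ZU by blast
  ultimately show ?thesis using zU good by blast
qed

end
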